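(* Let $\mathcal{D}$ be a probability distribution over triples $(x,y,z)$, $\rho>0$, and let $S$ be an i.i.d. sample of size $N$ from $\mathcal{D}$. Define $l_J(x,y,z;u,v,w) = -l_p(h_p(g(x;u);v),y)+\rho\,l_u(h_u(g(x;u);w),z)$. Let $(u^\ast,v^\ast,w^\ast)$ solve the expected-risk problem $$E_{\mathcal{D}}[l_J(u^\ast,v^\ast,w^\ast)] = \min_u\Big[\max_v E_{\mathcal{D}}[-l_p(u,v)] + \rho\min_w E_{\mathcal{D}}[l_u(u,w)]\Big]$$ (with $v^\ast$, $w^\ast$ the inner optimizers at $u^\ast$), and let $(\hat u,\hat v,\hat w)$ solve the same problem with $E_{\mathcal{D}}$ replaced by the empirical mean $E_S$ (with $\hat v$, $\hat w$ the empirical inner optimizers at $\hat u$). Then $$E_{S\sim\mathcal{D}^N}\Big[\big|E_{\mathcal{D}}[l_J(u^\ast,v^\ast,w^\ast)] - E_{\mathcal{D}}[l_J(\hat u,\hat v,\hat w)]\big|\Big] \le 4\,E_{S\sim\mathcal{D}^N}\Big[\mathfrak{R}(l_p\circ H_p\circ G\circ S) + \rho\,\mathfrak{R}(l_u\circ H_u\circ G\circ S)\Big].$$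
   Context: Setting: $\mathcal{X}\subset\mathbb{R}^D$; a filter $g(\cdot;u):\mathcal{X}\to\mathbb{R}^d$ with $u\in\mathcal{U}$; predictors $h_p(\cdot;v)$, $v\in\mathcal{V}$, and $h_u(\cdot;w)$, $w\in\mathcal{W}$, on filter outputs; real-valued losses $l_p,l_u$. $\mathcal{U},\mathcal{V},\mathcal{W}$ are compact convex subsets of Euclidean spaces and all maps are continuous so that optima are attained. Notation: $l_p(u,v)$ denotes $l_p(h_p(g(x;u);v),y)$, $l_u(u,w)$ denotes $l_u(h_u(g(x;u);w),z)$; $E_{\mathcal{D}}$ is expectation over $(x,y,z)\sim\mathcal{D}$ and $E_S[f]=\frac1N\sum_{(x,y,z)\in S}f(x,y,z)$. Function classes: $l_p\circ H_p\circ G\circ S=\{(x,y,z)\mapsto l_p(h_p(g(x;u);v),y):u\in\mathcal{U},v\in\mathcal{V}\}$ and $l_u\circ H_u\circ G\circ S=\{(x,y,z)\mapsto l_u(h_u(g(x;u);w),z):u\in\mathcal{U},w\in\mathcal{W}\}$. For a class $F$ and sample $S=\{(x_i,y_i,z_i)\}_{i=1}^N$, the empirical Rademacher complexity is $\mathfrak{R}(F\circ S)=\frac1N E_{\sigma\sim\{-1,+1\}^N}\big[\sup_{f\in F}\sum_{i=1}^N\sigma_i f(x_i,y_i,z_i)\big]$ with $\sigma$ uniform on $\{-1,+1\}^N$. *)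

theory Defs
  imports "HOL-Probability.Probability"
begin

definition emp_mean :: "nat \<Rightarrow> (nat \<Rightarrow> 'd) \<Rightarrow> ('d \<Rightarrow> real) \<Rightarrow> real" where
  "emp_mean N S f = (\<Sum>i<N. f (S i)) / real N"

definition rademacher :: "nat \<Rightarrow> ('d \<Rightarrow> real) set \<Rightarrow> (nat \<Rightarrow> 'd) \<Rightarrow> real" where
  "rademacher N F S =
     (1 / real N) * ((\<Sum>\<sigma>\<in>({..<N} \<rightarrow>\<^sub>E {-1::real, 1}). (SUP f\<in>F. \<Sum>i<N. \<sigma> i * f (S i))) / 2 ^ N)"

end

theory Submission
  imports Defs
begin


lemma bdd_cont:
  fixes F :: "'t::metric_space \<Rightarrow> real"
  assumes "compact T" "continuous_on T F"
  shows "bdd_above (F ` T)" "bdd_below (F ` T)"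
  using compact_continuous_image[OF assms(2,1)]
  by (auto intro: bounded_imp_bdd_above bounded_imp_bdd_below compact_imp_bounded)

lemma meas_SUP_cont:
  fixes F :: "'t::{metric_space,second_countable_topology} \<Rightarrow> 'w \<Rightarrow> real"
  assumes cpt: "compact T" and ne: "T \<noteq> {}"
    and meas: "\<And>t. t \<in> T \<Longrightarrow> F t \<in> borel_measurable Mx"
    and cont: "\<And>x. x \<in> space Mx \<Longrightarrow> continuous_on T (\<lambda>t. F t x)"
  shows "(\<lambda>x. SUP t\<in>T. F t x) \<in> borel_measurable Mx"
proof -
  obtain C where C: "countable C" "C \<subseteq> T" "T \<subseteq> closure C"
    using separable by blast
  have cl: "closure C = T"
    using C compact_imp_closed[OF cpt] closure_minimal by blast
  have Cne: "C \<noteq> {}" using C ne by auto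
  have eq: "(SUP t\<in>T. F t x) = (SUP t\<in>C. F t x)" if x: "x \<in> space Mx" for x
  proof (rule antisym)
    have bT: "bdd_above ((\<lambda>t. F t x) ` T)" using bdd_cont[OF cpt cont[OF x]] by simp
    hence bC: "bdd_above ((\<lambda>t. F t x) ` C)" using C(2) by (meson bdd_above_mono image_mono)
    show "(SUP t\<in>C. F t x) \<le> (SUP t\<in>T. F t x)"
      using Cne C(2) bT by (intro cSUP_subset_mono) auto
    show "(SUP t\<in>T. F t x) \<le> (SUP t\<in>C. F t x)"
    proof (rule cSUP_least[OF ne])
      fix t assume t: "t \<in> T"
      show "F t x \<le> (SUP t\<in>C. F t x)"
        using continuous_le_on_closure[of C "\<lambda>t. F t x" t "SUP t\<in>C. F t x"] cont[OF x] cl t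
          cSUP_upper[OF _ bC] by auto
    qed
  qed
  have "(\<lambda>x. SUP t\<in>C. F t x) \<in> borel_measurable Mx"
  proof (rule borel_measurable_cSUP)
    show "countable C" by fact
    show "\<And>i. i \<in> C \<Longrightarrow> F i \<in> borel_measurable Mx" using meas C by auto
    fix x assume x: "x \<in> space Mx"
    show "bdd_above ((\<lambda>i. F i x) ` C)"
      using bdd_cont[OF cpt cont[OF x]] C(2) by (meson bdd_above_mono image_mono)
  qed
  then show ?thesis using eq measurable_cong by (smt (verit))
qed

definition rs :: "nat \<Rightarrow> 't set \<Rightarrow> ('t \<Rightarrow> 'd \<Rightarrow> real) \<Rightarrow> (nat \<Rightarrow> real) \<Rightarrow> (nat \<Rightarrow> 'd) \<Rightarrow> real" where
  "rs N T f \<sigma> S = (SUP t\<in>T. \<Sum>i<N. \<sigma> i * f t (S i))"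

definition Gs :: "nat \<Rightarrow> 't set \<Rightarrow> ('t \<Rightarrow> 'd \<Rightarrow> real) \<Rightarrow> (nat \<Rightarrow> real) \<Rightarrow> (nat \<Rightarrow> 'd) \<Rightarrow> real" where
  "Gs N T f \<sigma> Z = (SUP t\<in>T. \<Sum>i<N. \<sigma> i * (f t (Z i) - f t (Z (N+i))))
                 + (SUP t\<in>T. \<Sum>i<N. - \<sigma> i * (f t (Z i) - f t (Z (N+i))))"

definition pm :: "nat \<Rightarrow> (nat \<Rightarrow> real) \<Rightarrow> nat \<Rightarrow> nat" where
  "pm N \<sigma> k = (if k < N then (if \<sigma> k = 1 then k else k + N)
     else if k < 2*N then (if \<sigma> (k - N) = 1 then k else k - N) else k)"

lemma pm_in: "k < 2*N \<Longrightarrow> pm N \<sigma> k < 2*N"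
  by (auto simp: pm_def)

lemma pm_inv: "k < 2*N \<Longrightarrow> pm N \<sigma> (pm N \<sigma> k) = k"
  by (auto simp: pm_def)

lemma pm_bij: "bij_betw (pm N \<sigma>) {..<2*N} {..<2*N}"
  by (rule bij_betwI[where g="pm N \<sigma>"]) (auto simp: pm_in pm_inv)

definition ng :: "nat \<Rightarrow> (nat \<Rightarrow> real) \<Rightarrow> nat \<Rightarrow> real" where
  "ng N \<sigma> = (\<lambda>i\<in>{..<N}. - \<sigma> i)"

lemma ng_in: "x \<in> {..<N} \<rightarrow>\<^sub>E {-1::real, 1} \<Longrightarrow> ng N x \<in> {..<N} \<rightarrow>\<^sub>E {-1::real, 1}"
  unfolding ng_def restrict_PiE_iff by (auto simp: PiE_mem)

lemma ng_ng: "x \<in> {..<N} \<rightarrow>\<^sub>E {-1::real, 1} \<Longrightarrow> ng N (ng N x) = x"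
proof
  fix i assume x: "x \<in> {..<N} \<rightarrow>\<^sub>E {-1::real, 1}"
  show "ng N (ng N x) i = x i"
  proof (cases "i < N")
    case True then show ?thesis by (simp add: ng_def)
  next
    case False then show ?thesis using PiE_arb[OF x, of i] by (simp add: ng_def)
  qed
qed

lemma ng_bij: "bij_betw (ng N) ({..<N} \<rightarrow>\<^sub>E {-1::real, 1}) ({..<N} \<rightarrow>\<^sub>E {-1::real, 1})"
proof (rule bij_betwI[where g="ng N"])
  show "ng N \<in> ({..<N} \<rightarrow>\<^sub>E {-1::real, 1}) \<rightarrow> ({..<N} \<rightarrow>\<^sub>E {-1::real, 1})"
    by (rule funcsetI) (rule ng_in)
  then show "ng N \<in> ({..<N} \<rightarrow>\<^sub>E {-1::real, 1}) \<rightarrow> ({..<N} \<rightarrow>\<^sub>E {-1::real, 1})" .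
  show "ng N (ng N x) = x" if "x \<in> {..<N} \<rightarrow>\<^sub>E {-1::real, 1}" for x by (rule ng_ng[OF that])
  show "ng N (ng N y) = y" if "y \<in> {..<N} \<rightarrow>\<^sub>E {-1::real, 1}" for y by (rule ng_ng[OF that])
qed

locale cls =
  fixes D :: "'d measure" and T :: "'t::{metric_space,second_countable_topology} set"
    and f :: "'t \<Rightarrow> 'd \<Rightarrow> real" and N :: nat
  assumes D: "prob_space D" and cpt: "compact T" and ne: "T \<noteq> {}"
    and intf: "\<And>t. t \<in> T \<Longrightarrow> integrable D (f t)"
    and contf: "\<And>d. d \<in> space D \<Longrightarrow> continuous_on T (\<lambda>t. f t d)"
begin

lemma measf: "t \<in> T \<Longrightarrow> f t \<in> borel_measurable D"
  using intf by auto

lemma meas_comp: "t \<in> T \<Longrightarrow> k \<in> K \<Longrightarrow> (\<lambda>Z. f t (Z k)) \<in> borel_measurable (PiM K (\<lambda>_. D))"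
  by (rule measurable_compose[OF measurable_component_singleton[of k K "\<lambda>_. D"] measf]) auto

lemma cont_rs: "(\<And>i. i < N \<Longrightarrow> S i \<in> space D) \<Longrightarrow> continuous_on T (\<lambda>t. \<Sum>i<N. c i * f t (S i))"
  by (intro continuous_intros contf) auto

lemma cont_gs: "(\<And>i. i < 2*N \<Longrightarrow> Z i \<in> space D) \<Longrightarrow>
    continuous_on T (\<lambda>t. \<Sum>i<N. c i * (f t (Z i) - f t (Z (N+i))))"
  by (intro continuous_intros contf) auto

lemma meas_rs:
  assumes h: "\<And>i. i < N \<Longrightarrow> h i \<in> K"
  shows "(\<lambda>Z. rs N T f \<sigma> (\<lambda>i. Z (h i))) \<in> borel_measurable (PiM K (\<lambda>_. D))"
  unfolding rs_def
proof (rule meas_SUP_cont[OF cpt ne])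
  fix t assume t: "t \<in> T"
  show "(\<lambda>Z. \<Sum>i<N. \<sigma> i * f t (Z (h i))) \<in> borel_measurable (PiM K (\<lambda>_. D))"
    using h t by (intro borel_measurable_sum borel_measurable_times borel_measurable_const
        meas_comp) auto
next
  fix Z assume "Z \<in> space (PiM K (\<lambda>_. D))"
  then have "\<And>i. i < N \<Longrightarrow> Z (h i) \<in> space D" using h by (auto simp: space_PiM PiE_iff)
  then show "continuous_on T (\<lambda>t. \<Sum>i<N. \<sigma> i * f t (Z (h i)))"
    using cont_rs[of "\<lambda>i. Z (h i)"] by auto
qed

lemma meas_gs_part:
  shows "(\<lambda>Z. SUP t\<in>T. \<Sum>i<N. c i * (f t (Z i) - f t (Z (N+i)))) \<in> borel_measurable (PiM {..<2*N} (\<lambda>_. D))"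
proof (rule meas_SUP_cont[OF cpt ne])
  fix t assume t: "t \<in> T"
  show "(\<lambda>Z. \<Sum>i<N. c i * (f t (Z i) - f t (Z (N+i)))) \<in> borel_measurable (PiM {..<2*N} (\<lambda>_. D))"
    using t by (intro borel_measurable_sum borel_measurable_times borel_measurable_const borel_measurable_diff
        meas_comp) auto
next
  fix Z assume "Z \<in> space (PiM {..<2*N} (\<lambda>_. D))"
  then have "\<And>i. i < 2*N \<Longrightarrow> Z i \<in> space D" by (auto simp: space_PiM PiE_iff)
  then show "continuous_on T (\<lambda>t. \<Sum>i<N. c i * (f t (Z i) - f t (Z (N+i))))"
    using cont_gs by auto
qed

lemma meas_Gs: "Gs N T f \<sigma> \<in> borel_measurable (PiM {..<2*N} (\<lambda>_. D))"
proof -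
  have "(\<lambda>Z. Gs N T f \<sigma> Z) \<in> borel_measurable (PiM {..<2*N} (\<lambda>_. D))"
    unfolding Gs_def using meas_gs_part[of \<sigma>] meas_gs_part[of "\<lambda>i. - \<sigma> i"]
    by (intro borel_measurable_add) auto
  then show ?thesis by simp
qed

lemma Gs_nonneg:
  assumes Z: "\<And>i. i < 2*N \<Longrightarrow> Z i \<in> space D"
  shows "0 \<le> Gs N T f \<sigma> Z"
proof -
  obtain t0 where t0: "t0 \<in> T" using ne by auto
  let ?a = "\<lambda>t. \<Sum>i<N. \<sigma> i * (f t (Z i) - f t (Z (N+i)))"
  let ?b = "\<lambda>t. \<Sum>i<N. - \<sigma> i * (f t (Z i) - f t (Z (N+i)))"
  have "?a t0 \<le> (SUP t\<in>T. ?a t)"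
    by (rule cSUP_upper[OF t0]) (rule bdd_cont(1)[OF cpt cont_gs[of Z, OF Z]])
  moreover have "?b t0 \<le> (SUP t\<in>T. ?b t)"
    by (rule cSUP_upper[OF t0]) (rule bdd_cont(1)[OF cpt cont_gs[of Z, OF Z]])
  moreover have "?a t0 + ?b t0 = 0" by (simp add: sum.distrib[symmetric])
  ultimately show ?thesis unfolding Gs_def by linarith
qed

lemma Gs_perm:
  assumes \<sigma>: "\<And>i. i < N \<Longrightarrow> \<sigma> i = 1 \<or> \<sigma> i = -1"
  shows "Gs N T f (\<lambda>_. 1) (\<lambda>n\<in>{..<2*N}. Z (pm N \<sigma> n)) = Gs N T f \<sigma> Z"
proof -
  let ?Z = "\<lambda>n\<in>{..<2*N}. Z (pm N \<sigma> n)"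
  have e: "f t (Z (pm N \<sigma> i)) - f t (Z (pm N \<sigma> (N+i))) = \<sigma> i * (f t (Z i) - f t (Z (N+i)))" if "i < N" for t i
    using \<sigma>[OF that] that by (auto simp: pm_def add.commute)
  have e': "f t (Z (pm N \<sigma> (N+i))) - f t (Z (pm N \<sigma> i)) = - (\<sigma> i * (f t (Z i) - f t (Z (N+i))))" if "i < N" for t i
    using e[OF that, of t] by linarith
  show ?thesis unfolding Gs_def by (simp add: e e')
qed

lemma Gs_bound:
  assumes Z: "\<And>i. i < 2*N \<Longrightarrow> Z i \<in> space D"
  shows "Gs N T f \<sigma> Z \<le> rs N T f \<sigma> Z + rs N T f (ng N \<sigma>) (\<lambda>i. Z (N+i))
          + rs N T f (ng N \<sigma>) Z + rs N T f \<sigma> (\<lambda>i. Z (N+i))"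
proof -
  have Z1: "\<And>i. i < N \<Longrightarrow> Z i \<in> space D" and Z2: "\<And>i. i < N \<Longrightarrow> Z (N+i) \<in> space D"
    using Z by auto
  have up: "(\<Sum>i<N. c i * f t (S i)) \<le> rs N T f c S"
    if "t \<in> T" "\<And>i. i < N \<Longrightarrow> S i \<in> space D" for t c S
    unfolding rs_def by (rule cSUP_upper[OF that(1)]) (rule bdd_cont(1)[OF cpt cont_rs[of S, OF that(2)]])
  have 1: "(SUP t\<in>T. \<Sum>i<N. \<sigma> i * (f t (Z i) - f t (Z (N+i))))
      \<le> rs N T f \<sigma> Z + rs N T f (ng N \<sigma>) (\<lambda>i. Z (N+i))"
  proof (rule cSUP_least[OF ne])
    fix t assume t: "t \<in> T"
    have "(\<Sum>i<N. \<sigma> i * (f t (Z i) - f t (Z (N+i))))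
        = (\<Sum>i<N. \<sigma> i * f t (Z i)) + (\<Sum>i<N. ng N \<sigma> i * f t (Z (N+i)))"
      by (simp add: ng_def sum.distrib[symmetric] algebra_simps)
    also have "\<dots> \<le> rs N T f \<sigma> Z + rs N T f (ng N \<sigma>) (\<lambda>i. Z (N+i))"
      using up[where c=\<sigma> and S=Z, OF t Z1] up[where c="ng N \<sigma>" and S="\<lambda>i. Z (N+i)", OF t] Z2 by simp
    finally show "(\<Sum>i<N. \<sigma> i * (f t (Z i) - f t (Z (N+i))))
      \<le> rs N T f \<sigma> Z + rs N T f (ng N \<sigma>) (\<lambda>i. Z (N+i))" .
  qed
  have 2: "(SUP t\<in>T. \<Sum>i<N. - \<sigma> i * (f t (Z i) - f t (Z (N+i))))
      \<le> rs N T f (ng N \<sigma>) Z + rs N T f \<sigma> (\<lambda>i. Z (N+i))"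
  proof (rule cSUP_least[OF ne])
    fix t assume t: "t \<in> T"
    have "(\<Sum>i<N. - \<sigma> i * (f t (Z i) - f t (Z (N+i))))
        = (\<Sum>i<N. ng N \<sigma> i * f t (Z i)) + (\<Sum>i<N. \<sigma> i * f t (Z (N+i)))"
      by (simp add: ng_def sum.distrib[symmetric] algebra_simps)
    also have "\<dots> \<le> rs N T f (ng N \<sigma>) Z + rs N T f \<sigma> (\<lambda>i. Z (N+i))"
      using up[where c="ng N \<sigma>" and S=Z, OF t Z1] up[where c=\<sigma> and S="\<lambda>i. Z (N+i)", OF t] Z2 by simp
    finally show "(\<Sum>i<N. - \<sigma> i * (f t (Z i) - f t (Z (N+i))))
      \<le> rs N T f (ng N \<sigma>) Z + rs N T f \<sigma> (\<lambda>i. Z (N+i))" .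
  qed
  show ?thesis using 1 2 unfolding Gs_def by linarith
qed

lemma sum_Gs:
  assumes Z: "\<And>i. i < 2*N \<Longrightarrow> Z i \<in> space D"
  shows "(\<Sum>\<sigma>\<in>({..<N} \<rightarrow>\<^sub>E {-1::real, 1}). Gs N T f \<sigma> Z)
     \<le> 2 * (\<Sum>\<sigma>\<in>({..<N} \<rightarrow>\<^sub>E {-1::real, 1}). rs N T f \<sigma> Z)
       + 2 * (\<Sum>\<sigma>\<in>({..<N} \<rightarrow>\<^sub>E {-1::real, 1}). rs N T f \<sigma> (\<lambda>i. Z (N+i)))"
proof -
  let ?S = "{..<N} \<rightarrow>\<^sub>E {-1::real, 1}"
  have r1: "(\<Sum>\<sigma>\<in>?S. rs N T f (ng N \<sigma>) Z) = (\<Sum>\<sigma>\<in>?S. rs N T f \<sigma> Z)"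
    by (rule sum.reindex_bij_betw[OF ng_bij])
  have r2: "(\<Sum>\<sigma>\<in>?S. rs N T f (ng N \<sigma>) (\<lambda>i. Z (N+i))) = (\<Sum>\<sigma>\<in>?S. rs N T f \<sigma> (\<lambda>i. Z (N+i)))"
    by (rule sum.reindex_bij_betw[OF ng_bij])
  have "(\<Sum>\<sigma>\<in>?S. Gs N T f \<sigma> Z) \<le> (\<Sum>\<sigma>\<in>?S. rs N T f \<sigma> Z + rs N T f (ng N \<sigma>) (\<lambda>i. Z (N+i))
          + rs N T f (ng N \<sigma>) Z + rs N T f \<sigma> (\<lambda>i. Z (N+i)))"
    by (rule sum_mono) (rule Gs_bound[OF Z])
  also have "\<dots> = 2 * (\<Sum>\<sigma>\<in>?S. rs N T f \<sigma> Z) + 2 * (\<Sum>\<sigma>\<in>?S. rs N T f \<sigma> (\<lambda>i. Z (N+i)))"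
    by (simp only: sum.distrib r1 r2 sum_distrib_left[symmetric])
  finally show ?thesis .
qed

lemma comp_int:
  assumes t: "t \<in> T" and k: "k \<in> K"
  shows "integrable (PiM K (\<lambda>_. D)) (\<lambda>Z. f t (Z k))"
    and "(\<integral>Z. f t (Z k) \<partial>PiM K (\<lambda>_. D)) = (\<integral>x. f t x \<partial>D)"
proof -
  have d: "distr (PiM K (\<lambda>_. D)) D (\<lambda>\<omega>. \<omega> k) = D"
    using distr_PiM_component[of K "\<lambda>_. D" k] D k by simp
  have m: "(\<lambda>\<omega>. \<omega> k) \<in> measurable (PiM K (\<lambda>_. D)) D"
    using measurable_component_singleton[of k K "\<lambda>_. D"] k by simp
  show "integrable (PiM K (\<lambda>_. D)) (\<lambda>Z. f t (Z k))"
    using integrable_distr_eq[OF m measf[OF t]] intf[OF t] d by simp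
  show "(\<integral>Z. f t (Z k) \<partial>PiM K (\<lambda>_. D)) = (\<integral>x. f t x \<partial>D)"
    using integral_distr[OF m measf[OF t]] d by simp
qed

lemma jensen:
  assumes S: "\<And>i. i < N \<Longrightarrow> S i \<in> space D" and t1: "t1 \<in> T" and t2: "t2 \<in> T" and N: "N > 0"
  defines "h \<equiv> \<lambda>Z'. (\<Sum>i<N. (f t1 (S i) - f t1 (Z' (N+i)))) + (\<Sum>i<N. (f t2 (Z' (N+i)) - f t2 (S i)))"
  shows "integrable (PiM {N..<2*N} (\<lambda>_. D)) h"
    and "(\<integral>Z'. h Z' \<partial>PiM {N..<2*N} (\<lambda>_. D)) = real N * (((\<Sum>i<N. f t1 (S i)) / real N - (\<integral>x. f t1 x \<partial>D))
            - ((\<Sum>i<N. f t2 (S i)) / real N - (\<integral>x. f t2 x \<partial>D)))"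
    and "Z' \<in> space (PiM {N..<2*N} (\<lambda>_. D)) \<Longrightarrow> h Z' \<le> Gs N T f (\<lambda>_. 1) (merge {..<N} {N..<2*N} (S, Z'))"
proof -
  let ?J = "PiM {N..<2*N} (\<lambda>_. D)"
  have k: "N + i \<in> {N..<2*N}" if "i < N" for i using that by auto
  have i1: "integrable ?J (\<lambda>Z. f t (Z (N+i)))" if "t \<in> T" "i < N" for t i
    using comp_int(1)[OF that(1) k[OF that(2)]] .
  have i2: "(\<integral>Z. f t (Z (N+i)) \<partial>?J) = (\<integral>x. f t x \<partial>D)" if "t \<in> T" "i < N" for t i
    using comp_int(2)[OF that(1) k[OF that(2)]] .
  interpret J: prob_space ?J using D by (intro prob_space_PiM) auto
  show int: "integrable ?J h" unfolding h_def using i1 t1 t2 by (intro Bochner_Integration.integrable_add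
      Bochner_Integration.integrable_sum Bochner_Integration.integrable_diff J.integrable_const) auto
  have ia: "integrable ?J (\<lambda>Z'. c - f t (Z' (N+i)))" if "t \<in> T" "i < N" for c t i
    using i1[OF that] by (intro Bochner_Integration.integrable_diff J.integrable_const)
  have ib: "integrable ?J (\<lambda>Z'. f t (Z' (N+i)) - c)" if "t \<in> T" "i < N" for c t i
    using i1[OF that] by (intro Bochner_Integration.integrable_diff J.integrable_const)
  have ja: "(\<integral>Z'. c - f t (Z' (N+i)) \<partial>?J) = c - (\<integral>x. f t x \<partial>D)" if "t \<in> T" "i < N" for c t i
    using i1[OF that] i2[OF that] J.prob_space
    by (subst Bochner_Integration.integral_diff[OF J.integrable_const]) auto
  have jb: "(\<integral>Z'. f t (Z' (N+i)) - c \<partial>?J) = (\<integral>x. f t x \<partial>D) - c" if "t \<in> T" "i < N" for c t i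
    using i1[OF that] i2[OF that] J.prob_space
    by (subst Bochner_Integration.integral_diff[OF _ J.integrable_const]) auto
  have "(\<integral>Z'. h Z' \<partial>?J) = (\<integral>Z'. (\<Sum>i<N. (f t1 (S i) - f t1 (Z' (N+i)))) \<partial>?J)
       + (\<integral>Z'. (\<Sum>i<N. (f t2 (Z' (N+i)) - f t2 (S i))) \<partial>?J)"
    unfolding h_def using ia[OF t1] ib[OF t2]
    by (intro Bochner_Integration.integral_add Bochner_Integration.integrable_sum) auto
  also have "\<dots> = (\<Sum>i<N. (f t1 (S i) - (\<integral>x. f t1 x \<partial>D))) + (\<Sum>i<N. ((\<integral>x. f t2 x \<partial>D) - f t2 (S i)))"
    using ia[OF t1] ib[OF t2] ja[OF t1] jb[OF t2]
    by (simp add: Bochner_Integration.integral_sum)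
  also have "\<dots> = real N * (((\<Sum>i<N. f t1 (S i)) / real N - (\<integral>x. f t1 x \<partial>D))
            - ((\<Sum>i<N. f t2 (S i)) / real N - (\<integral>x. f t2 x \<partial>D)))"
    using N by (simp add: sum_subtractf algebra_simps)
  finally show "(\<integral>Z'. h Z' \<partial>?J) = real N * (((\<Sum>i<N. f t1 (S i)) / real N - (\<integral>x. f t1 x \<partial>D))
            - ((\<Sum>i<N. f t2 (S i)) / real N - (\<integral>x. f t2 x \<partial>D)))" .
  assume Z': "Z' \<in> space ?J"
  let ?Z = "merge {..<N} {N..<2*N} (S, Z')"
  have m1: "?Z i = S i" if "i < N" for i using that by (simp add: merge_def)
  have m2: "?Z (N+i) = Z' (N+i)" if "i < N" for i using that by (simp add: merge_def)
  have Zs: "?Z i \<in> space D" if "i < 2*N" for i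
    using that S Z' by (auto simp: merge_def space_PiM PiE_iff)
  let ?a = "\<lambda>c t. \<Sum>i<N. c i * (f t (?Z i) - f t (?Z (N+i)))"
  have "?a (\<lambda>_. 1) t1 \<le> (SUP t\<in>T. ?a (\<lambda>_. 1) t)"
    by (rule cSUP_upper[OF t1]) (rule bdd_cont(1)[OF cpt cont_gs[of ?Z, OF Zs]])
  moreover have "?a (\<lambda>_. - 1) t2 \<le> (SUP t\<in>T. ?a (\<lambda>_. - 1) t)"
    by (rule cSUP_upper[OF t2]) (rule bdd_cont(1)[OF cpt cont_gs[of ?Z, OF Zs]])
  moreover have "h Z' = ?a (\<lambda>_. 1) t1 + ?a (\<lambda>_. - 1) t2"
    unfolding h_def by (simp add: m1 m2 sum_negf[symmetric])
  ultimately show "h Z' \<le> Gs N T f (\<lambda>_. 1) ?Z" unfolding Gs_def by simp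
qed

end



lemma cSUP_eq_max:
  fixes F :: "'b \<Rightarrow> real"
  assumes "x \<in> A" "\<And>y. y \<in> A \<Longrightarrow> F y \<le> F x"
  shows "(SUP y\<in>A. F y) = F x"
proof -
  have b: "bdd_above (F ` A)" by (rule bdd_aboveI2[where M="F x"]) (use assms in auto)
  show ?thesis using assms by (intro antisym cSUP_least cSUP_upper b) auto
qed

lemma cINF_eq_min:
  fixes F :: "'b \<Rightarrow> real"
  assumes "x \<in> A" "\<And>y. y \<in> A \<Longrightarrow> F x \<le> F y"
  shows "(INF y\<in>A. F y) = F x"
proof -
  have b: "bdd_below (F ` A)" by (rule bdd_belowI2[where m="F x"]) (use assms in auto)
  show ?thesis using assms by (intro antisym cINF_greatest cINF_lower b) auto
qed

lemma alg:
  fixes Ep Sp :: "'a \<times> 'b \<Rightarrow> real" and Eu Su :: "'a \<times> 'c \<Rightarrow> real" and \<rho> e :: real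
  assumes rho: "\<rho> > 0" and e: "e > 0"
    and mem: "us \<in> U" "vs \<in> V" "ws \<in> W" "uh \<in> U" "vh \<in> V" "wh \<in> W"
    and vs_opt: "\<And>v. v \<in> V \<Longrightarrow> - Ep (us, v) \<le> - Ep (us, vs)"
    and ws_opt: "\<And>w. w \<in> W \<Longrightarrow> Eu (us, ws) \<le> Eu (us, w)"
    and us_opt: "(SUP v\<in>V. - Ep (us, v)) + \<rho> * (INF w\<in>W. Eu (us, w))
               \<le> (SUP v\<in>V. - Ep (uh, v)) + \<rho> * (INF w\<in>W. Eu (uh, w))"
    and vh_opt: "\<And>v. v \<in> V \<Longrightarrow> - Sp (uh, v) \<le> - Sp (uh, vh)"
    and wh_opt: "\<And>w. w \<in> W \<Longrightarrow> Su (uh, wh) \<le> Su (uh, w)"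
    and uh_opt: "(SUP v\<in>V. - Sp (uh, v)) + \<rho> * (INF w\<in>W. Su (uh, w))
               \<le> (SUP v\<in>V. - Sp (us, v)) + \<rho> * (INF w\<in>W. Su (us, w))"
    and v1: "v1 \<in> V" "\<And>v. v \<in> V \<Longrightarrow> - Sp (us, v) \<le> - Sp (us, v1)"
    and w1: "w1 \<in> W" "\<And>w. w \<in> W \<Longrightarrow> Su (us, w1) \<le> Su (us, w)"
  shows "\<exists>t1\<in>U\<times>V. \<exists>t2\<in>U\<times>V. \<exists>t3\<in>U\<times>W. \<exists>t4\<in>U\<times>W.
    \<bar>(- Ep (us, vs) + \<rho> * Eu (us, ws)) - (- Ep (uh, vh) + \<rho> * Eu (uh, wh))\<bar>
      \<le> (Sp t1 - Ep t1) - (Sp t2 - Ep t2) + \<rho> * ((Su t3 - Eu t3) - (Su t4 - Eu t4)) + e"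
proof -
  define A where "A = - Ep (us, vs) + \<rho> * Eu (us, ws)"
  define B where "B = - Ep (uh, vh) + \<rho> * Eu (uh, wh)"
  have SA: "(SUP v\<in>V. - Ep (us, v)) = - Ep (us, vs)" by (rule cSUP_eq_max[where F="\<lambda>v. - Ep (us, v)", OF mem(2) vs_opt])
  have IA: "(INF w\<in>W. Eu (us, w)) = Eu (us, ws)" by (rule cINF_eq_min[where F="\<lambda>w. Eu (us, w)", OF mem(3) ws_opt])
  have SB: "(SUP v\<in>V. - Sp (uh, v)) = - Sp (uh, vh)" by (rule cSUP_eq_max[where F="\<lambda>v. - Sp (uh, v)", OF mem(5) vh_opt])
  have IB: "(INF w\<in>W. Su (uh, w)) = Su (uh, wh)" by (rule cINF_eq_min[where F="\<lambda>w. Su (uh, w)", OF mem(6) wh_opt])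
  have S1: "(SUP v\<in>V. - Sp (us, v)) = - Sp (us, v1)" by (rule cSUP_eq_max[where F="\<lambda>v. - Sp (us, v)", OF v1])
  have I1: "(INF w\<in>W. Su (us, w)) = Su (us, w1)" by (rule cINF_eq_min[where F="\<lambda>w. Su (us, w)", OF w1])
  have BA: "B - A \<le> (Sp (uh, vh) - Ep (uh, vh)) - (Sp (us, v1) - Ep (us, v1))
      + \<rho> * ((Su (us, ws) - Eu (us, ws)) - (Su (uh, wh) - Eu (uh, wh)))"
  proof -
    have a: "- Sp (uh, vh) + \<rho> * Su (uh, wh) \<le> - Sp (us, v1) + \<rho> * Su (us, w1)"
      using uh_opt unfolding SB IB S1 I1 .
    have b: "- Ep (us, v1) \<le> - Ep (us, vs)" using vs_opt[OF v1(1)] .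
    have c: "\<rho> * Su (us, w1) \<le> \<rho> * Su (us, ws)" using w1(2)[OF mem(3)] rho by simp
    show ?thesis using a b c unfolding A_def B_def by (simp add: algebra_simps)
  qed
  show ?thesis
  proof (cases "bdd_above ((\<lambda>v. - Ep (uh, v)) ` V) \<and> bdd_below ((\<lambda>w. Eu (uh, w)) ` W)")
    case True
    have Vne: "V \<noteq> {}" using mem by auto
    obtain v2 where v2: "v2 \<in> V" "(SUP v\<in>V. - Ep (uh, v)) - e < - Ep (uh, v2)"
      using less_cSUP_iff[OF Vne True[THEN conjunct1], of "(SUP v\<in>V. - Ep (uh, v)) - e"] e
      by auto
    have Il: "(INF w\<in>W. Eu (uh, w)) \<le> Eu (uh, wh)"
      using True mem(6) by (intro cINF_lower) auto
    have AB: "A - B \<le> (Sp (uh, v2) - Ep (uh, v2)) - (Sp (uh, vh) - Ep (uh, vh)) + e"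
    proof -
      have a: "A \<le> (SUP v\<in>V. - Ep (uh, v)) + \<rho> * (INF w\<in>W. Eu (uh, w))"
        using us_opt unfolding SA IA A_def .
      have b: "\<rho> * (INF w\<in>W. Eu (uh, w)) \<le> \<rho> * Eu (uh, wh)" using Il rho by simp
      have c: "Sp (uh, vh) \<le> Sp (uh, v2)" using vh_opt[OF v2(1)] by simp
      show ?thesis using a b c v2(2) unfolding B_def by (simp add: algebra_simps)
    qed
    show ?thesis
    proof (cases "A \<ge> B")
      case True
      then show ?thesis using AB v2(1) mem
        by (intro bexI[of _ "(uh, v2)"] bexI[of _ "(uh, vh)"] bexI[of _ "(uh, wh)"]) (auto simp: A_def B_def)
    next
      case False
      then show ?thesis using BA v1(1) mem e
        by (intro bexI[of _ "(uh, vh)"] bexI[of _ "(us, v1)"] bexI[of _ "(us, ws)"] bexI[of _ "(uh, wh)"])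
          (auto simp: A_def B_def)
    qed
  next
    case False
    then have "\<not> bdd_above ((\<lambda>v. - Ep (uh, v)) ` V) \<or> \<not> bdd_below ((\<lambda>w. Eu (uh, w)) ` W)" by blast
    then show ?thesis
    proof
      assume nb: "\<not> bdd_above ((\<lambda>v. - Ep (uh, v)) ` V)"
      obtain v2 where v2: "v2 \<in> V" "\<bar>A - B\<bar> - Ep (uh, vh) < - Ep (uh, v2)"
        using nb unfolding bdd_above_def by (auto simp: not_le)
      have c: "Sp (uh, vh) \<le> Sp (uh, v2)" using vh_opt[OF v2(1)] by simp
      have X: "\<bar>A - B\<bar> \<le> (Sp (uh, v2) - Ep (uh, v2)) - (Sp (uh, vh) - Ep (uh, vh))
          + \<rho> * ((Su (uh, wh) - Eu (uh, wh)) - (Su (uh, wh) - Eu (uh, wh))) + e"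
        using v2 c e by simp
      have m: "(uh, v2) \<in> U \<times> V" "(uh, vh) \<in> U \<times> V" "(uh, wh) \<in> U \<times> W" using mem v2 by auto
      show ?thesis using X m unfolding A_def B_def by blast
    next
      assume nb: "\<not> bdd_below ((\<lambda>w. Eu (uh, w)) ` W)"
      obtain w2 where w2: "w2 \<in> W" "Eu (uh, w2) < Eu (uh, wh) - \<bar>A - B\<bar> / \<rho>"
        using nb unfolding bdd_below_def by (auto simp: not_le)
      have c: "Su (uh, wh) \<le> Su (uh, w2)" using wh_opt[OF w2(1)] by simp
      have "\<bar>A - B\<bar> \<le> \<rho> * ((Su (uh, w2) - Eu (uh, w2)) - (Su (uh, wh) - Eu (uh, wh)))"
      proof -
        have "\<bar>A - B\<bar> / \<rho> \<le> (Su (uh, w2) - Eu (uh, w2)) - (Su (uh, wh) - Eu (uh, wh))"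
          using w2 c by linarith
        then show ?thesis using rho by (simp add: divide_le_eq mult.commute)
      qed
      then have X: "\<bar>A - B\<bar> \<le> (Sp (uh, vh) - Ep (uh, vh)) - (Sp (uh, vh) - Ep (uh, vh))
          + \<rho> * ((Su (uh, w2) - Eu (uh, w2)) - (Su (uh, wh) - Eu (uh, wh))) + e"
        using e by simp
      have m: "(uh, vh) \<in> U \<times> V" "(uh, w2) \<in> U \<times> W" "(uh, wh) \<in> U \<times> W" using mem w2 by auto
      show ?thesis using X m unfolding A_def B_def by blast
    qed
  qed
qed



lemma ennreal_int_le:
  assumes h: "integrable M h"
  shows "ennreal (\<integral>x. h x \<partial>M) \<le> (\<integral>\<^sup>+x. ennreal (h x) \<partial>M)"
proof -
  have i: "integrable M (\<lambda>x. max 0 (h x))" using h by (intro integrable_max) auto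
  have "(\<integral>x. h x \<partial>M) \<le> (\<integral>x. max 0 (h x) \<partial>M)" using h i by (intro integral_mono) auto
  then have "ennreal (\<integral>x. h x \<partial>M) \<le> ennreal (\<integral>x. max 0 (h x) \<partial>M)" by (rule ennreal_leI)
  also have "\<dots> = (\<integral>\<^sup>+x. ennreal (max 0 (h x)) \<partial>M)"
    using i by (intro nn_integral_eq_integral[symmetric]) auto
  also have "\<dots> = (\<integral>\<^sup>+x. ennreal (h x) \<partial>M)" by (simp add: ennreal_max_0)
  finally show ?thesis .
qed

lemma ennreal_add_le: "ennreal (a + b) \<le> ennreal a + ennreal b"
proof (cases "a \<ge> 0 \<and> b \<ge> 0")
  case True then show ?thesis by (simp add: ennreal_plus)
next
  case False
  then have "\<not> (a \<ge> 0) \<or> \<not> (b \<ge> 0)" by blast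
  then show ?thesis
  proof
    assume "\<not> (a \<ge> 0)"
    then have "ennreal (a + b) \<le> ennreal b" by (intro ennreal_leI) auto
    then show ?thesis by (simp add: add_increasing)
  next
    assume "\<not> (b \<ge> 0)"
    then have "ennreal (a + b) \<le> ennreal a" by (intro ennreal_leI) auto
    then show ?thesis by (simp add: add_increasing2)
  qed
qed

lemma cont_chain:
  fixes g :: "'x::topological_space \<Rightarrow> 'a::topological_space \<Rightarrow> 'f::topological_space"
    and hp :: "'f \<Rightarrow> 'b::topological_space \<Rightarrow> 'p::topological_space"
  assumes g_cont: "continuous_on (X \<times> U) (\<lambda>(x, u). g x u)"
    and hp_cont: "continuous_on (UNIV \<times> V) (\<lambda>(f, v). hp f v)"
    and lp_cont: "\<And>y. continuous_on UNIV (\<lambda>p. lp p y)"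
    and x: "x \<in> X"
  shows "continuous_on (U \<times> V) (\<lambda>t. lp (hp (g x (fst t)) (snd t)) y)"
proof -
  have c1: "continuous_on (U \<times> V) (\<lambda>t. (\<lambda>(x, u). g x u) (x, fst t))"
    by (rule continuous_on_compose2[OF g_cont]) (auto intro!: continuous_intros simp: x)
  have c2: "continuous_on (U \<times> V) (\<lambda>t. (\<lambda>(f, v). hp f v) (g x (fst t), snd t))"
    by (rule continuous_on_compose2[OF hp_cont]) (use c1 in \<open>auto intro!: continuous_intros\<close>)
  show ?thesis
    by (rule continuous_on_compose2[OF lp_cont[of y]]) (use c2 in auto)
qed

lemma rad_rs: "rademacher N (f ` T) S = (1 / real N) * ((\<Sum>\<sigma>\<in>({..<N} \<rightarrow>\<^sub>E {-1::real, 1}). rs N T f \<sigma> S) / 2 ^ N)"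
  by (simp add: rademacher_def rs_def image_image)


lemma rs_restrict: "rs N T f \<sigma> (\<lambda>n\<in>{..<N}. Z (h n)) = rs N T f \<sigma> (\<lambda>n. Z (h n))"
  by (simp add: rs_def)


lemma arith1:
  fixes a b d e c r n :: real
  shows "((2 * (c * a) + 2 * (c * b)) + r * (2 * (c * d) + 2 * (c * e))) / n = c * (2 * (a + r * d) + 2 * (b + r * e)) / n"
  by (simp add: algebra_simps)

lemma arith2:
  fixes n c X :: real
  shows "n \<noteq> 0 \<Longrightarrow> (n * c) * X / n = c * X"
  by simp

lemma ennr_arith:
  fixes c :: real and X :: ennreal
  assumes "0 \<le> c"
  shows "ennreal (c * 2) * X + ennreal (c * 2) * X = ennreal c * (4 * X)"
proof -
  have e: "ennreal (c * 2) = ennreal c * 2" using assms by (simp add: ennreal_mult'')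
  have "ennreal c * 2 * X + ennreal c * 2 * X = ennreal c * (2 * X + 2 * X)"
    by (simp add: distrib_left mult.assoc)
  also have "2 * X + 2 * X = (2 + 2) * X" by (rule distrib_right[symmetric])
  also have "(2 + 2 :: ennreal) = 4" by simp
  finally show ?thesis unfolding e .
qed

theorem theorem4:
  fixes X :: "'x::euclidean_space set"
    and U :: "'a::euclidean_space set" and V :: "'b::euclidean_space set" and W :: "'c::euclidean_space set"
    and g :: "'x \<Rightarrow> 'a \<Rightarrow> 'f::euclidean_space"
    and hp :: "'f \<Rightarrow> 'b \<Rightarrow> 'p::topological_space"
    and hu :: "'f \<Rightarrow> 'c \<Rightarrow> 'q::topological_space"
    and lp :: "'p \<Rightarrow> 'y \<Rightarrow> real" and lu :: "'q \<Rightarrow> 'z \<Rightarrow> real"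
    and D :: "('x \<times> 'y \<times> 'z) measure"
    and \<rho> :: real and N :: nat
    and us :: 'a and vs :: 'b and ws :: 'c
    and uh :: "(nat \<Rightarrow> 'x \<times> 'y \<times> 'z) \<Rightarrow> 'a"
    and vh :: "(nat \<Rightarrow> 'x \<times> 'y \<times> 'z) \<Rightarrow> 'b"
    and wh :: "(nat \<Rightarrow> 'x \<times> 'y \<times> 'z) \<Rightarrow> 'c"
  assumes U: "compact U" "convex U"
    and V: "compact V" "convex V"
    and W: "compact W" "convex W"
    and g_cont: "continuous_on (X \<times> U) (\<lambda>(x, u). g x u)"
    and hp_cont: "continuous_on (UNIV \<times> V) (\<lambda>(f, v). hp f v)"
    and hu_cont: "continuous_on (UNIV \<times> W) (\<lambda>(f, w). hu f w)"
    and lp_cont: "\<And>y. continuous_on UNIV (\<lambda>p. lp p y)"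
    and lu_cont: "\<And>z. continuous_on UNIV (\<lambda>q. lu q z)"
    and D: "prob_space D"
    and D_X: "\<And>d. d \<in> space D \<Longrightarrow> fst d \<in> X"
    and int_p: "\<And>u v. u \<in> U \<Longrightarrow> v \<in> V \<Longrightarrow> integrable D (\<lambda>(x, y, z). lp (hp (g x u) v) y)"
    and int_u: "\<And>u w. u \<in> U \<Longrightarrow> w \<in> W \<Longrightarrow> integrable D (\<lambda>(x, y, z). lu (hu (g x u) w) z)"
    and rho: "\<rho> > 0"
    and N: "N > 0"
    \<comment> \<open>population solution (u*, v*, w*)\<close>
    and us: "us \<in> U" and vs: "vs \<in> V" and ws: "ws \<in> W"
    and vs_opt: "\<And>v. v \<in> V \<Longrightarrow>
        (\<integral>(x, y, z). - lp (hp (g x us) v) y \<partial>D) \<le> (\<integral>(x, y, z). - lp (hp (g x us) vs) y \<partial>D)"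
    and ws_opt: "\<And>w. w \<in> W \<Longrightarrow>
        (\<integral>(x, y, z). lu (hu (g x us) ws) z \<partial>D) \<le> (\<integral>(x, y, z). lu (hu (g x us) w) z \<partial>D)"
    and us_opt: "\<And>u. u \<in> U \<Longrightarrow>
        (SUP v\<in>V. \<integral>(x, y, z). - lp (hp (g x us) v) y \<partial>D) + \<rho> * (INF w\<in>W. \<integral>(x, y, z). lu (hu (g x us) w) z \<partial>D)
        \<le> (SUP v\<in>V. \<integral>(x, y, z). - lp (hp (g x u) v) y \<partial>D) + \<rho> * (INF w\<in>W. \<integral>(x, y, z). lu (hu (g x u) w) z \<partial>D)"
    \<comment> \<open>empirical solution (u^, v^, w^) for each sample S\<close>
    and uh: "\<And>S. S \<in> space (PiM {..<N} (\<lambda>_. D)) \<Longrightarrow> uh S \<in> U"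
    and vh: "\<And>S. S \<in> space (PiM {..<N} (\<lambda>_. D)) \<Longrightarrow> vh S \<in> V"
    and wh: "\<And>S. S \<in> space (PiM {..<N} (\<lambda>_. D)) \<Longrightarrow> wh S \<in> W"
    and vh_opt: "\<And>S v. S \<in> space (PiM {..<N} (\<lambda>_. D)) \<Longrightarrow> v \<in> V \<Longrightarrow>
        emp_mean N S (\<lambda>(x, y, z). - lp (hp (g x (uh S)) v) y) \<le> emp_mean N S (\<lambda>(x, y, z). - lp (hp (g x (uh S)) (vh S)) y)"
    and wh_opt: "\<And>S w. S \<in> space (PiM {..<N} (\<lambda>_. D)) \<Longrightarrow> w \<in> W \<Longrightarrow>
        emp_mean N S (\<lambda>(x, y, z). lu (hu (g x (uh S)) (wh S)) z) \<le> emp_mean N S (\<lambda>(x, y, z). lu (hu (g x (uh S)) w) z)"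
    and uh_opt: "\<And>S u. S \<in> space (PiM {..<N} (\<lambda>_. D)) \<Longrightarrow> u \<in> U \<Longrightarrow>
        (SUP v\<in>V. emp_mean N S (\<lambda>(x, y, z). - lp (hp (g x (uh S)) v) y))
          + \<rho> * (INF w\<in>W. emp_mean N S (\<lambda>(x, y, z). lu (hu (g x (uh S)) w) z))
        \<le> (SUP v\<in>V. emp_mean N S (\<lambda>(x, y, z). - lp (hp (g x u) v) y))
          + \<rho> * (INF w\<in>W. emp_mean N S (\<lambda>(x, y, z). lu (hu (g x u) w) z))"
    and uh_meas: "uh \<in> PiM {..<N} (\<lambda>_. D) \<rightarrow>\<^sub>M borel"
    and vh_meas: "vh \<in> PiM {..<N} (\<lambda>_. D) \<rightarrow>\<^sub>M borel"
    and wh_meas: "wh \<in> PiM {..<N} (\<lambda>_. D) \<rightarrow>\<^sub>M borel"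
  shows "(\<integral>\<^sup>+ S. ennreal \<bar>(\<integral>(x, y, z). - lp (hp (g x us) vs) y + \<rho> * lu (hu (g x us) ws) z \<partial>D)
                  - (\<integral>(x, y, z). - lp (hp (g x (uh S)) (vh S)) y + \<rho> * lu (hu (g x (uh S)) (wh S)) z \<partial>D)\<bar>
            \<partial>(PiM {..<N} (\<lambda>_. D)))
       \<le> 4 * (\<integral>\<^sup>+ S. ennreal
                (rademacher N ((\<lambda>(u, v). (\<lambda>(x, y, z). lp (hp (g x u) v) y)) ` (U \<times> V)) S
                 + \<rho> * rademacher N ((\<lambda>(u, w). (\<lambda>(x, y, z). lu (hu (g x u) w) z)) ` (U \<times> W)) S)
            \<partial>(PiM {..<N} (\<lambda>_. D)))"
proof -
  define fp :: "'a \<times> 'b \<Rightarrow> 'x \<times> 'y \<times> 'z \<Rightarrow> real" where "fp = (\<lambda>(u, v). (\<lambda>(x, y, z). lp (hp (g x u) v) y))"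
  define fu :: "'a \<times> 'c \<Rightarrow> 'x \<times> 'y \<times> 'z \<Rightarrow> real" where "fu = (\<lambda>(u, w). (\<lambda>(x, y, z). lu (hu (g x u) w) z))"
  let ?I = "{..<N}" and ?J = "{N..<2*N}" and ?K = "{..<2*N}"
  let ?M = "PiM {..<N} (\<lambda>_. D)" and ?MJ = "PiM {N..<2*N} (\<lambda>_. D)" and ?PK = "PiM {..<2*N} (\<lambda>_. D)"
  let ?Sg = "{..<N} \<rightarrow>\<^sub>E {-1::real, 1}"
  interpret D: prob_space D by (rule D)
  have fpx: "fp t (x, y, z) = lp (hp (g x (fst t)) (snd t)) y" for t x y z
    by (cases t) (simp add: fp_def)
  have fux: "fu t (x, y, z) = lu (hu (g x (fst t)) (snd t)) z" for t x y z
    by (cases t) (simp add: fu_def)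
  have clsP: "cls D (U \<times> V) fp"
    unfolding cls_def
  proof (intro conjI allI impI)
    show "prob_space D" by (rule D)
    show "compact (U \<times> V)" using U V by (simp add: compact_Times)
    show "U \<times> V \<noteq> {}" using us vs by auto
    show "integrable D (fp t)" if "t \<in> U \<times> V" for t
      using int_p that by (cases t) (auto simp: fp_def)
    show "continuous_on (U \<times> V) (\<lambda>t. fp t d)" if "d \<in> space D" for d
    proof -
      obtain x y z where d: "d = (x, y, z)" by (cases d) auto
      have "x \<in> X" using D_X[OF that] d by simp
      then show ?thesis unfolding d fpx by (rule cont_chain[OF g_cont hp_cont lp_cont])
    qed
  qed
  interpret P: cls D "U \<times> V" fp N by (rule clsP)
  have clsQ: "cls D (U \<times> W) fu"
    unfolding cls_def
  proof (intro conjI allI impI)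
    show "prob_space D" by (rule D)
    show "compact (U \<times> W)" using U W by (simp add: compact_Times)
    show "U \<times> W \<noteq> {}" using us ws by auto
    show "integrable D (fu t)" if "t \<in> U \<times> W" for t
      using int_u that by (cases t) (auto simp: fu_def)
    show "continuous_on (U \<times> W) (\<lambda>t. fu t d)" if "d \<in> space D" for d
    proof -
      obtain x y z where d: "d = (x, y, z)" by (cases d) auto
      have "x \<in> X" using D_X[OF that] d by simp
      then show ?thesis unfolding d fux by (rule cont_chain[OF g_cont hu_cont lu_cont])
    qed
  qed
  interpret Q: cls D "U \<times> W" fu N by (rule clsQ)
  define Gt where "Gt Z = (Gs N (U \<times> V) fp (\<lambda>_. 1) Z + \<rho> * Gs N (U \<times> W) fu (\<lambda>_. 1) Z) / real N" for Z
  define Gst where "Gst \<sigma> Z = (Gs N (U \<times> V) fp \<sigma> Z + \<rho> * Gs N (U \<times> W) fu \<sigma> Z) / real N" for \<sigma> Z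
  define Rt where "Rt S = rademacher N (fp ` (U \<times> V)) S + \<rho> * rademacher N (fu ` (U \<times> W)) S" for S
  define Ep where "Ep t = (\<integral>d. fp t d \<partial>D)" for t
  define Eu where "Eu t = (\<integral>d. fu t d \<partial>D)" for t
  have spaceK: "Z i \<in> space D" if "Z \<in> space ?PK" "i < 2*N" for Z i
    using that by (auto simp: space_PiM PiE_iff)
  have spaceI: "S i \<in> space D" if "S \<in> space ?M" "i < N" for S i
    using that by (auto simp: space_PiM PiE_iff)
  have eqA: "(\<integral>(x, y, z). - lp (hp (g x u) v) y + \<rho> * lu (hu (g x u) w) z \<partial>D) = - Ep (u, v) + \<rho> * Eu (u, w)"
    if "u \<in> U" "v \<in> V" "w \<in> W" for u v w
  proof -
    have "(\<lambda>(x, y, z). - lp (hp (g x u) v) y + \<rho> * lu (hu (g x u) w) z) = (\<lambda>d. - fp (u, v) d + \<rho> * fu (u, w) d)"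
      by (auto simp: fp_def fu_def)
    moreover have "integrable D (fp (u, v))" "integrable D (fu (u, w))"
      using P.intf Q.intf that by auto
    ultimately show ?thesis unfolding Ep_def Eu_def by simp
  qed
  have eqP: "(\<integral>(x, y, z). - lp (hp (g x u) v) y \<partial>D) = - Ep (u, v)" for u v
  proof -
    have "(\<lambda>(x, y, z). - lp (hp (g x u) v) y) = (\<lambda>d. - fp (u, v) d)" by (auto simp: fp_def)
    then show ?thesis unfolding Ep_def by simp
  qed
  have eqU: "(\<integral>(x, y, z). lu (hu (g x u) w) z \<partial>D) = Eu (u, w)" for u w
  proof -
    have "(\<lambda>(x, y, z). lu (hu (g x u) w) z) = (\<lambda>d. fu (u, w) d)" by (auto simp: fu_def)
    then show ?thesis unfolding Eu_def by simp
  qed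
  have emP: "emp_mean N S (\<lambda>(x, y, z). - lp (hp (g x u) v) y) = - ((\<Sum>i<N. fp (u, v) (S i)) / real N)" for S u v
  proof -
    have "(\<lambda>(x, y, z). - lp (hp (g x u) v) y) = (\<lambda>d. - fp (u, v) d)" by (auto simp: fp_def)
    then show ?thesis unfolding emp_mean_def by (simp add: sum_negf)
  qed
  have emU: "emp_mean N S (\<lambda>(x, y, z). lu (hu (g x u) w) z) = (\<Sum>i<N. fu (u, w) (S i)) / real N" for S u w
  proof -
    have "(\<lambda>(x, y, z). lu (hu (g x u) w) z) = (\<lambda>d. fu (u, w) d)" by (auto simp: fu_def)
    then show ?thesis unfolding emp_mean_def by simp
  qed
  have stepA: "ennreal \<bar>(\<integral>(x, y, z). - lp (hp (g x us) vs) y + \<rho> * lu (hu (g x us) ws) z \<partial>D)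
                  - (\<integral>(x, y, z). - lp (hp (g x (uh S)) (vh S)) y + \<rho> * lu (hu (g x (uh S)) (wh S)) z \<partial>D)\<bar>
        \<le> (\<integral>\<^sup>+ Z'. ennreal (Gt (merge ?I ?J (S, Z'))) \<partial>?MJ)" if S: "S \<in> space ?M" for S
  proof -
    define Sp where "Sp t = (\<Sum>i<N. fp t (S i)) / real N" for t
    define Su where "Su t = (\<Sum>i<N. fu t (S i)) / real N" for t
    have Si: "\<And>i. i < N \<Longrightarrow> S i \<in> space D" using spaceI[OF S] .
    have cSp: "continuous_on V (\<lambda>v. - Sp (us, v))"
    proof -
      have "continuous_on (U \<times> V) (\<lambda>t. (\<Sum>i<N. 1 * fp t (S i)))" by (rule P.cont_rs[where S=S, OF Si])
      then have "continuous_on (U \<times> V) (\<lambda>t. - Sp t)" unfolding Sp_def using N by (auto intro!: continuous_intros)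
      then show ?thesis by (rule continuous_on_compose2) (use us in \<open>auto intro!: continuous_intros\<close>)
    qed
    have cSu: "continuous_on W (\<lambda>w. Su (us, w))"
    proof -
      have "continuous_on (U \<times> W) (\<lambda>t. (\<Sum>i<N. 1 * fu t (S i)))" by (rule Q.cont_rs[where S=S, OF Si])
      then have "continuous_on (U \<times> W) (\<lambda>t. Su t)" unfolding Su_def using N by (auto intro!: continuous_intros)
      then show ?thesis by (rule continuous_on_compose2) (use us in \<open>auto intro!: continuous_intros\<close>)
    qed
    obtain v1 where v1: "v1 \<in> V" "\<And>v. v \<in> V \<Longrightarrow> - Sp (us, v) \<le> - Sp (us, v1)"
      using continuous_attains_sup[OF V(1) _ cSp] vs by auto
    obtain w1 where w1: "w1 \<in> W" "\<And>w. w \<in> W \<Longrightarrow> Su (us, w1) \<le> Su (us, w)"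
      using continuous_attains_inf[OF W(1) _ cSu] ws by auto
    have mem: "uh S \<in> U" "vh S \<in> V" "wh S \<in> W" using uh vh wh S by auto
    let ?X = "\<lambda>t1 t2 t3 t4. (Sp t1 - Ep t1) - (Sp t2 - Ep t2) + \<rho> * ((Su t3 - Eu t3) - (Su t4 - Eu t4))"
    have alg': "\<exists>t1\<in>U\<times>V. \<exists>t2\<in>U\<times>V. \<exists>t3\<in>U\<times>W. \<exists>t4\<in>U\<times>W.
        \<bar>(- Ep (us, vs) + \<rho> * Eu (us, ws)) - (- Ep (uh S, vh S) + \<rho> * Eu (uh S, wh S))\<bar>
          \<le> ?X t1 t2 t3 t4 + e" if e: "e > 0" for e
    proof (rule alg[OF rho e us vs ws mem])
      show "- Ep (us, v) \<le> - Ep (us, vs)" if "v \<in> V" for v using vs_opt[OF that] by (simp add: eqP)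
      show "Eu (us, ws) \<le> Eu (us, w)" if "w \<in> W" for w using ws_opt[OF that] by (simp add: eqU)
      show "(SUP v\<in>V. - Ep (us, v)) + \<rho> * (INF w\<in>W. Eu (us, w))
               \<le> (SUP v\<in>V. - Ep (uh S, v)) + \<rho> * (INF w\<in>W. Eu (uh S, w))"
        using us_opt[OF mem(1)] by (simp add: eqP eqU)
      show "- Sp (uh S, v) \<le> - Sp (uh S, vh S)" if "v \<in> V" for v
        using vh_opt[OF S that] by (simp add: emP Sp_def)
      show "Su (uh S, wh S) \<le> Su (uh S, w)" if "w \<in> W" for w
        using wh_opt[OF S that] by (simp add: emU Su_def)
      show "(SUP v\<in>V. - Sp (uh S, v)) + \<rho> * (INF w\<in>W. Su (uh S, w))
               \<le> (SUP v\<in>V. - Sp (us, v)) + \<rho> * (INF w\<in>W. Su (us, w))"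
        using uh_opt[OF S us] by (simp add: emP emU Sp_def Su_def)
    qed (use v1 w1 in auto)
    define L where "L = \<bar>(- Ep (us, vs) + \<rho> * Eu (us, ws)) - (- Ep (uh S, vh S) + \<rho> * Eu (uh S, wh S))\<bar>"
    have "ennreal L \<le> (\<integral>\<^sup>+ Z'. ennreal (Gt (merge ?I ?J (S, Z'))) \<partial>?MJ)"
    proof (rule ennreal_le_epsilon)
      fix e :: real assume e: "0 < e"
      obtain t1 t2 t3 t4 where t: "t1 \<in> U\<times>V" "t2 \<in> U\<times>V" "t3 \<in> U\<times>W" "t4 \<in> U\<times>W"
        and Lb: "L \<le> ?X t1 t2 t3 t4 + e"
        using alg'[OF e] unfolding L_def by blast
      define hP where "hP = (\<lambda>Z'. (\<Sum>i<N. (fp t1 (S i) - fp t1 (Z' (N+i)))) + (\<Sum>i<N. (fp t2 (Z' (N+i)) - fp t2 (S i))))"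
      define hQ where "hQ = (\<lambda>Z'. (\<Sum>i<N. (fu t3 (S i) - fu t3 (Z' (N+i)))) + (\<Sum>i<N. (fu t4 (Z' (N+i)) - fu t4 (S i))))"
      have JP1: "integrable ?MJ hP" unfolding hP_def by (rule P.jensen(1)[where S=S, OF Si t(1) t(2) N])
      have JQ1: "integrable ?MJ hQ" unfolding hQ_def by (rule Q.jensen(1)[where S=S, OF Si t(3) t(4) N])
      have JP2: "(\<integral>Z'. hP Z' \<partial>?MJ) = real N * ((Sp t1 - Ep t1) - (Sp t2 - Ep t2))"
        unfolding hP_def Sp_def Ep_def by (rule P.jensen(2)[where S=S, OF Si t(1) t(2) N])
      have JQ2: "(\<integral>Z'. hQ Z' \<partial>?MJ) = real N * ((Su t3 - Eu t3) - (Su t4 - Eu t4))"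
        unfolding hQ_def Su_def Eu_def by (rule Q.jensen(2)[where S=S, OF Si t(3) t(4) N])
      have JP3: "hP Z' \<le> Gs N (U \<times> V) fp (\<lambda>_. 1) (merge ?I ?J (S, Z'))" if "Z' \<in> space ?MJ" for Z'
        unfolding hP_def by (rule P.jensen(3)[where S=S, OF Si t(1) t(2) N that])
      have JQ3: "hQ Z' \<le> Gs N (U \<times> W) fu (\<lambda>_. 1) (merge ?I ?J (S, Z'))" if "Z' \<in> space ?MJ" for Z'
        unfolding hQ_def by (rule Q.jensen(3)[where S=S, OF Si t(3) t(4) N that])
      have intH: "integrable ?MJ (\<lambda>Z'. (hP Z' + \<rho> * hQ Z') / real N)"
        using JP1 JQ1 by auto
      have "(\<integral>Z'. (hP Z' + \<rho> * hQ Z') / real N \<partial>?MJ) = ((\<integral>Z'. hP Z' \<partial>?MJ) + \<rho> * (\<integral>Z'. hQ Z' \<partial>?MJ)) / real N"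
        using JP1 JQ1 by simp
      also have "\<dots> = ?X t1 t2 t3 t4"
        using N unfolding JP2 JQ2 by (simp add: field_simps)
      finally have Xeq: "?X t1 t2 t3 t4 = (\<integral>Z'. (hP Z' + \<rho> * hQ Z') / real N \<partial>?MJ)" ..
      have "ennreal (?X t1 t2 t3 t4) \<le> (\<integral>\<^sup>+ Z'. ennreal ((hP Z' + \<rho> * hQ Z') / real N) \<partial>?MJ)"
        unfolding Xeq by (rule ennreal_int_le[OF intH])
      also have "\<dots> \<le> (\<integral>\<^sup>+ Z'. ennreal (Gt (merge ?I ?J (S, Z'))) \<partial>?MJ)"
      proof (rule nn_integral_mono)
        fix Z' assume Z': "Z' \<in> space ?MJ"
        have "hP Z' + \<rho> * hQ Z' \<le> Gs N (U \<times> V) fp (\<lambda>_. 1) (merge ?I ?J (S, Z')) + \<rho> * Gs N (U \<times> W) fu (\<lambda>_. 1) (merge ?I ?J (S, Z'))"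
          using JP3[OF Z'] JQ3[OF Z'] rho by (intro add_mono mult_left_mono) auto
        then show "ennreal ((hP Z' + \<rho> * hQ Z') / real N) \<le> ennreal (Gt (merge ?I ?J (S, Z')))"
          unfolding Gt_def using N by (intro ennreal_leI divide_right_mono) auto
      qed
      finally have 1: "ennreal (?X t1 t2 t3 t4) \<le> (\<integral>\<^sup>+ Z'. ennreal (Gt (merge ?I ?J (S, Z'))) \<partial>?MJ)" .
      have "ennreal L \<le> ennreal (?X t1 t2 t3 t4 + e)" using Lb by (rule ennreal_leI)
      also have "\<dots> \<le> ennreal (?X t1 t2 t3 t4) + ennreal e" by (rule ennreal_add_le)
      also have "\<dots> \<le> (\<integral>\<^sup>+ Z'. ennreal (Gt (merge ?I ?J (S, Z'))) \<partial>?MJ) + ennreal e"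
        using 1 by (rule add_right_mono)
      finally show "ennreal L \<le> (\<integral>\<^sup>+ Z'. ennreal (Gt (merge ?I ?J (S, Z'))) \<partial>?MJ) + ennreal e" .
    qed
    then show ?thesis unfolding L_def using eqA[OF us vs ws] eqA[OF mem] by simp
  qed
  interpret PS: product_sigma_finite "\<lambda>_. D"
    unfolding product_sigma_finite_def by (auto intro: prob_space_imp_sigma_finite D)
  have KIJ: "{..<N} \<union> {N..<2*N} = {..<2*N}" by auto
  have measGt: "(\<lambda>Z. ennreal (Gt Z)) \<in> borel_measurable ?PK"
    unfolding Gt_def using P.meas_Gs Q.meas_Gs
    by (intro measurable_compose[OF _ measurable_ennreal] borel_measurable_divide borel_measurable_add
        borel_measurable_times borel_measurable_const) auto
  have measGst: "(\<lambda>Z. ennreal (Gst \<sigma> Z)) \<in> borel_measurable ?PK" for \<sigma>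
    unfolding Gst_def using P.meas_Gs Q.meas_Gs
    by (intro measurable_compose[OF _ measurable_ennreal] borel_measurable_divide borel_measurable_add
        borel_measurable_times borel_measurable_const) auto
  have fold: "integral\<^sup>N (PiM (?I \<union> ?J) (\<lambda>_. D)) (\<lambda>Z. ennreal (Gt Z))
      = (\<integral>\<^sup>+ S. (\<integral>\<^sup>+ Z'. ennreal (Gt (merge ?I ?J (S, Z'))) \<partial>?MJ) \<partial>?M)"
    by (rule PS.product_nn_integral_fold) (auto simp: KIJ measGt)
  have stepB: "(\<integral>\<^sup>+ S. ennreal \<bar>(\<integral>(x, y, z). - lp (hp (g x us) vs) y + \<rho> * lu (hu (g x us) ws) z \<partial>D)
                  - (\<integral>(x, y, z). - lp (hp (g x (uh S)) (vh S)) y + \<rho> * lu (hu (g x (uh S)) (wh S)) z \<partial>D)\<bar>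
            \<partial>?M) \<le> (\<integral>\<^sup>+ Z. ennreal (Gt Z) \<partial>?PK)"
  proof -
    have "(\<integral>\<^sup>+ S. ennreal \<bar>(\<integral>(x, y, z). - lp (hp (g x us) vs) y + \<rho> * lu (hu (g x us) ws) z \<partial>D)
                  - (\<integral>(x, y, z). - lp (hp (g x (uh S)) (vh S)) y + \<rho> * lu (hu (g x (uh S)) (wh S)) z \<partial>D)\<bar>
            \<partial>?M) \<le> (\<integral>\<^sup>+ S. (\<integral>\<^sup>+ Z'. ennreal (Gt (merge ?I ?J (S, Z'))) \<partial>?MJ) \<partial>?M)"
      by (rule nn_integral_mono) (rule stepA)
    also have "\<dots> = (\<integral>\<^sup>+ Z. ennreal (Gt Z) \<partial>?PK)" using fold unfolding KIJ by simp
    finally show ?thesis .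
  qed
  have perm: "(\<integral>\<^sup>+ Z. ennreal (Gt Z) \<partial>?PK) = (\<integral>\<^sup>+ Z. ennreal (Gst \<sigma> Z) \<partial>?PK)" if \<sigma>: "\<sigma> \<in> ?Sg" for \<sigma>
  proof -
    let ?t = "\<lambda>\<omega>. \<lambda>n\<in>?K. \<omega> (pm N \<sigma> n)"
    have bij: "inj_on (pm N \<sigma>) ?K" "pm N \<sigma> \<in> ?K \<rightarrow> ?K"
      using pm_bij[of N \<sigma>] by (auto simp: bij_betw_def)
    have d: "distr ?PK ?PK ?t = ?PK"
      using distr_PiM_reindex[of ?K "\<lambda>_. D" "pm N \<sigma>" ?K] D bij by simp
    have mt: "?t \<in> measurable ?PK ?PK"
      using bij by (intro measurable_restrict measurable_component_singleton) auto
    have mG: "(\<lambda>Z. ennreal (Gt Z)) \<in> borel_measurable (distr ?PK ?PK ?t)"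
      by (subst d) (rule measGt)
    have s: "\<And>i. i < N \<Longrightarrow> \<sigma> i = 1 \<or> \<sigma> i = -1" using \<sigma> by (auto simp: PiE_iff)
    have "(\<integral>\<^sup>+ Z. ennreal (Gt Z) \<partial>?PK) = (\<integral>\<^sup>+ Z. ennreal (Gt Z) \<partial>(distr ?PK ?PK ?t))"
      by (simp add: d)
    also have "\<dots> = (\<integral>\<^sup>+ Z. ennreal (Gt (?t Z)) \<partial>?PK)"
      by (rule nn_integral_distr[OF mt mG])
    also have "\<dots> = (\<integral>\<^sup>+ Z. ennreal (Gst \<sigma> Z) \<partial>?PK)"
    proof (rule nn_integral_cong)
      fix Z
      show "ennreal (Gt (?t Z)) = ennreal (Gst \<sigma> Z)"
        using P.Gs_perm[OF s, where Z=Z] Q.Gs_perm[OF s, where Z=Z] unfolding Gt_def Gst_def by simp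
    qed
    finally show ?thesis .
  qed
  have finSg: "finite ?Sg" by (simp add: finite_PiE)
  have cardSg: "card ?Sg = 2 ^ N" by (simp add: card_PiE numeral_2_eq_2)
  have sumrs: "(\<Sum>\<sigma>\<in>?Sg. rs N T f \<sigma> S) = real N * 2 ^ N * rademacher N (f ` T) S" for T and f :: "'t \<Rightarrow> 'x \<times> 'y \<times> 'z \<Rightarrow> real" and S
    using N unfolding rad_rs by simp
  have pw: "(\<Sum>\<sigma>\<in>?Sg. ennreal (Gst \<sigma> Z)) \<le> ennreal (2 ^ N * (2 * Rt Z + 2 * Rt (\<lambda>i. Z (N+i))))"
    if Z: "Z \<in> space ?PK" for Z
  proof -
    have Zs: "\<And>i. i < 2*N \<Longrightarrow> Z i \<in> space D" using spaceK[OF Z] .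
    have nn: "0 \<le> Gst \<sigma> Z" for \<sigma>
      unfolding Gst_def using P.Gs_nonneg[OF Zs] Q.Gs_nonneg[OF Zs] rho by simp
    define A1 where "A1 = (\<Sum>\<sigma>\<in>?Sg. rs N (U \<times> V) fp \<sigma> Z)"
    define A2 where "A2 = (\<Sum>\<sigma>\<in>?Sg. rs N (U \<times> V) fp \<sigma> (\<lambda>i. Z (N+i)))"
    define A3 where "A3 = (\<Sum>\<sigma>\<in>?Sg. rs N (U \<times> W) fu \<sigma> Z)"
    define A4 where "A4 = (\<Sum>\<sigma>\<in>?Sg. rs N (U \<times> W) fu \<sigma> (\<lambda>i. Z (N+i)))"
    define GP where "GP = (\<Sum>\<sigma>\<in>?Sg. Gs N (U \<times> V) fp \<sigma> Z)"
    define GQ where "GQ = (\<Sum>\<sigma>\<in>?Sg. Gs N (U \<times> W) fu \<sigma> Z)"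
    have s1: "(\<Sum>\<sigma>\<in>?Sg. ennreal (Gst \<sigma> Z)) = ennreal (\<Sum>\<sigma>\<in>?Sg. Gst \<sigma> Z)"
      using nn by simp
    have s2: "(\<Sum>\<sigma>\<in>?Sg. Gst \<sigma> Z) = (GP + \<rho> * GQ) / real N"
      unfolding Gst_def GP_def GQ_def sum_divide_distrib[symmetric] by (simp add: sum.distrib sum_distrib_left)
    have cP: "GP \<le> 2 * A1 + 2 * A2" unfolding GP_def A1_def A2_def by (rule P.sum_Gs[where Z=Z, OF Zs])
    have cQ: "GQ \<le> 2 * A3 + 2 * A4" unfolding GQ_def A3_def A4_def by (rule Q.sum_Gs[where Z=Z, OF Zs])
    have c: "GP + \<rho> * GQ \<le> (2 * A1 + 2 * A2) + \<rho> * (2 * A3 + 2 * A4)"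
      using cP cQ rho by (intro add_mono mult_left_mono) auto
    have c2: "(GP + \<rho> * GQ) / real N \<le> ((2 * A1 + 2 * A2) + \<rho> * (2 * A3 + 2 * A4)) / real N"
      using c by (rule divide_right_mono) simp
    have e1: "A1 = real N * 2 ^ N * rademacher N (fp ` (U \<times> V)) Z" unfolding A1_def by (rule sumrs)
    have e2: "A2 = real N * 2 ^ N * rademacher N (fp ` (U \<times> V)) (\<lambda>i. Z (N+i))" unfolding A2_def by (rule sumrs)
    have e3: "A3 = real N * 2 ^ N * rademacher N (fu ` (U \<times> W)) Z" unfolding A3_def by (rule sumrs)
    have e4: "A4 = real N * 2 ^ N * rademacher N (fu ` (U \<times> W)) (\<lambda>i. Z (N+i))" unfolding A4_def by (rule sumrs)
    have e: "((2 * A1 + 2 * A2) + \<rho> * (2 * A3 + 2 * A4)) / real N = 2 ^ N * (2 * Rt Z + 2 * Rt (\<lambda>i. Z (N+i)))"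
    proof -
      have "((2 * A1 + 2 * A2) + \<rho> * (2 * A3 + 2 * A4)) / real N = (real N * 2 ^ N) * (2 * Rt Z + 2 * Rt (\<lambda>i. Z (N+i))) / real N"
        unfolding e1 e2 e3 e4 Rt_def by (rule arith1)
      also have "\<dots> = 2 ^ N * (2 * Rt Z + 2 * Rt (\<lambda>i. Z (N+i)))"
        using N by (intro arith2) simp
      finally show ?thesis .
    qed
    show ?thesis unfolding s1 s2 using c2 e by (intro ennreal_leI) simp
  qed
  have measRt: "(\<lambda>S. ennreal (Rt S)) \<in> borel_measurable ?M"
  proof -
    have "(\<lambda>S. rs N (U \<times> V) fp \<sigma> (\<lambda>i. S i)) \<in> borel_measurable ?M"
         "(\<lambda>S. rs N (U \<times> W) fu \<sigma> (\<lambda>i. S i)) \<in> borel_measurable ?M" for \<sigma>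
      by (rule P.meas_rs, simp) (rule Q.meas_rs, simp)
    then show ?thesis unfolding Rt_def rad_rs
      by (intro measurable_compose[OF _ measurable_ennreal] borel_measurable_add borel_measurable_times
          borel_measurable_const borel_measurable_divide borel_measurable_sum) auto
  qed
  have marg: "(\<integral>\<^sup>+ Z. ennreal (Rt (\<lambda>n. Z (h n))) \<partial>?PK) = (\<integral>\<^sup>+ S. ennreal (Rt S) \<partial>?M)"
    if h: "inj_on h ?I" "h \<in> ?I \<rightarrow> ?K" for h
  proof -
    let ?t = "\<lambda>\<omega>. \<lambda>n\<in>?I. \<omega> (h n)"
    have d: "distr ?PK ?M ?t = ?M"
      using distr_PiM_reindex[of ?K "\<lambda>_. D" h ?I] D h by simp
    have mt: "?t \<in> measurable ?PK ?M"
      using h by (intro measurable_restrict measurable_component_singleton) auto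
    have mR: "(\<lambda>S. ennreal (Rt S)) \<in> borel_measurable (distr ?PK ?M ?t)"
      by (subst d) (rule measRt)
    have e: "Rt (?t Z) = Rt (\<lambda>n. Z (h n))" for Z
      unfolding Rt_def rad_rs rs_restrict ..
    have "(\<integral>\<^sup>+ S. ennreal (Rt S) \<partial>?M) = (\<integral>\<^sup>+ S. ennreal (Rt S) \<partial>(distr ?PK ?M ?t))"
      by (simp add: d)
    also have "\<dots> = (\<integral>\<^sup>+ Z. ennreal (Rt (?t Z)) \<partial>?PK)"
      by (rule nn_integral_distr[OF mt mR])
    finally show ?thesis unfolding e ..
  qed
  have measRK: "(\<lambda>Z. ennreal (Rt (\<lambda>n. Z (h n)))) \<in> borel_measurable ?PK"
    if h: "h \<in> ?I \<rightarrow> ?K" for h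
  proof -
    have a: "(\<lambda>S. rs N (U \<times> V) fp \<sigma> (\<lambda>i. S (h i))) \<in> borel_measurable ?PK" for \<sigma>
      by (rule P.meas_rs) (use h in auto)
    have b: "(\<lambda>S. rs N (U \<times> W) fu \<sigma> (\<lambda>i. S (h i))) \<in> borel_measurable ?PK" for \<sigma>
      by (rule Q.meas_rs) (use h in auto)
    from a b show ?thesis unfolding Rt_def rad_rs
      by (intro measurable_compose[OF _ measurable_ennreal] borel_measurable_add borel_measurable_times
          borel_measurable_const borel_measurable_divide borel_measurable_sum) auto
  qed
  have m1: "(\<integral>\<^sup>+ Z. ennreal (Rt Z) \<partial>?PK) = (\<integral>\<^sup>+ S. ennreal (Rt S) \<partial>?M)"
    using marg[of "\<lambda>n. n"] by simp
  have m2: "(\<integral>\<^sup>+ Z. ennreal (Rt (\<lambda>i. Z (N+i))) \<partial>?PK) = (\<integral>\<^sup>+ S. ennreal (Rt S) \<partial>?M)"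
    using marg[of "\<lambda>n. N + n"] by (auto simp: inj_on_def)
  have mK1: "(\<lambda>Z. ennreal (Rt Z)) \<in> borel_measurable ?PK" using measRK[of "\<lambda>n. n"] by simp
  have mK2: "(\<lambda>Z. ennreal (Rt (\<lambda>i. Z (N+i)))) \<in> borel_measurable ?PK" using measRK[of "\<lambda>n. N + n"] by auto
  have "ennreal (2 ^ N) * (\<integral>\<^sup>+ Z. ennreal (Gt Z) \<partial>?PK) = (\<Sum>\<sigma>\<in>?Sg. (\<integral>\<^sup>+ Z. ennreal (Gt Z) \<partial>?PK))"
    using cardSg by (simp add: ennreal_power[symmetric])
  also have "\<dots> = (\<Sum>\<sigma>\<in>?Sg. (\<integral>\<^sup>+ Z. ennreal (Gst \<sigma> Z) \<partial>?PK))"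
    by (rule sum.cong[OF refl perm])
  also have "\<dots> = (\<integral>\<^sup>+ Z. (\<Sum>\<sigma>\<in>?Sg. ennreal (Gst \<sigma> Z)) \<partial>?PK)"
    by (rule nn_integral_sum[symmetric]) (rule measGst)
  also have "\<dots> \<le> (\<integral>\<^sup>+ Z. ennreal (2 ^ N * (2 * Rt Z + 2 * Rt (\<lambda>i. Z (N+i)))) \<partial>?PK)"
    by (rule nn_integral_mono) (rule pw)
  also have "\<dots> \<le> (\<integral>\<^sup>+ Z. ennreal (2 ^ N * 2) * ennreal (Rt Z) + ennreal (2 ^ N * 2) * ennreal (Rt (\<lambda>i. Z (N+i))) \<partial>?PK)"
  proof (rule nn_integral_mono)
    fix Z
    have "ennreal (2 ^ N * (2 * Rt Z + 2 * Rt (\<lambda>i. Z (N+i)))) = ennreal ((2 ^ N * 2) * Rt Z + (2 ^ N * 2) * Rt (\<lambda>i. Z (N+i)))"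
      by (simp add: algebra_simps)
    also have "\<dots> \<le> ennreal ((2 ^ N * 2) * Rt Z) + ennreal ((2 ^ N * 2) * Rt (\<lambda>i. Z (N+i)))"
      by (rule ennreal_add_le)
    also have "\<dots> = ennreal (2 ^ N * 2) * ennreal (Rt Z) + ennreal (2 ^ N * 2) * ennreal (Rt (\<lambda>i. Z (N+i)))"
      by (simp add: ennreal_mult')
    finally show "ennreal (2 ^ N * (2 * Rt Z + 2 * Rt (\<lambda>i. Z (N+i))))
        \<le> ennreal (2 ^ N * 2) * ennreal (Rt Z) + ennreal (2 ^ N * 2) * ennreal (Rt (\<lambda>i. Z (N+i)))" .
  qed
  also have "\<dots> = ennreal (2 ^ N * 2) * (\<integral>\<^sup>+ Z. ennreal (Rt Z) \<partial>?PK) + ennreal (2 ^ N * 2) * (\<integral>\<^sup>+ Z. ennreal (Rt (\<lambda>i. Z (N+i))) \<partial>?PK)"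
  proof -
    have a: "(\<lambda>Z. ennreal (2 ^ N * 2) * ennreal (Rt Z)) \<in> borel_measurable ?PK"
      using mK1 by (rule borel_measurable_times_ennreal[OF borel_measurable_const])
    have b: "(\<lambda>Z. ennreal (2 ^ N * 2) * ennreal (Rt (\<lambda>i. Z (N+i)))) \<in> borel_measurable ?PK"
      using mK2 by (rule borel_measurable_times_ennreal[OF borel_measurable_const])
    show ?thesis
      unfolding nn_integral_add[OF a b] nn_integral_cmult[OF mK1] nn_integral_cmult[OF mK2] ..
  qed
  also have "\<dots> = ennreal (2 ^ N) * (4 * (\<integral>\<^sup>+ S. ennreal (Rt S) \<partial>?M))"
    unfolding m1 m2 by (rule ennr_arith) simp
  finally have C: "ennreal (2 ^ N) * (\<integral>\<^sup>+ Z. ennreal (Gt Z) \<partial>?PK) \<le> ennreal (2 ^ N) * (4 * (\<integral>\<^sup>+ S. ennreal (Rt S) \<partial>?M))" .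
  then have "(\<integral>\<^sup>+ Z. ennreal (Gt Z) \<partial>?PK) \<le> 4 * (\<integral>\<^sup>+ S. ennreal (Rt S) \<partial>?M)"
    by (subst (asm) ennreal_mult_le_mult_iff) auto
  with stepB have "(\<integral>\<^sup>+ S. ennreal \<bar>(\<integral>(x, y, z). - lp (hp (g x us) vs) y + \<rho> * lu (hu (g x us) ws) z \<partial>D)
                  - (\<integral>(x, y, z). - lp (hp (g x (uh S)) (vh S)) y + \<rho> * lu (hu (g x (uh S)) (wh S)) z \<partial>D)\<bar>
            \<partial>?M) \<le> 4 * (\<integral>\<^sup>+ S. ennreal (Rt S) \<partial>?M)" by (rule order.trans)
  then show ?thesis unfolding Rt_def fp_def fu_def .
qed

end
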